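(* Let $Q$ be a finite connected quandle that is isomorphic to a generalized Alexander quandle $\mathrm{GAlex}(G_0,f)$ for some finite group $G_0$ and $f\in\mathrm{Aut}(G_0)$. Let $e\in Q$, $G=\mathrm{Inn}(Q)$, $x=R_e$, $G'$ the derived subgroup of $G$ and $C(x)$ the centralizer of $x$ in $G$. Then the map $\pi_e:C(x)\cap G'\to\mathrm{inn}^{-1}(R_e)$, $\pi_e(g)=eg$, is a bijection. Hence $\pi_e$ induces a $\mathbb{Z}$-module isomorphism $(\pi_e)_*:\mathbb{Z}[C(x)\cap G']\to\mathbb{Z}[\mathrm{inn}^{-1}(R_e)]$, $\sum n_g g\mapsto\sum n_g\pi_e(g)$.
   Context: A quandle is a set with operation $*$ satisfying $a*a=a$; unique right division; $(a*b)*c=(a*c)*(b*c)$. $R_a(y)=y*a$; $\mathrm{Inn}(Q)$ is the permutation group generated by the $R_a$, acting on $Q$ on the right: $ag$ denotes the image of $a$ under $g$; connected means this action is transitive; $\mathrm{inn}(a)=R_a$. For a group $H$ and $f\in\mathrm{Aut}(H)$, $\mathrm{GAlex}(H,f)$ is the quandle on $H$ with $a*b=f(ab^{-1})b$. $\mathbb{Z}[S]$ denotes the free $\mathbb{Z}$-module with basis $S$. *)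

theory Defs
  imports "HOL-Algebra.Algebra"
begin

definition quandle :: "'a set \<Rightarrow> ('a \<Rightarrow> 'a \<Rightarrow> 'a) \<Rightarrow> bool" where
  "quandle Q op \<longleftrightarrow>
     (\<forall>a\<in>Q. \<forall>b\<in>Q. op a b \<in> Q) \<and>
     (\<forall>a\<in>Q. op a a = a) \<and>
     (\<forall>a\<in>Q. \<forall>b\<in>Q. \<exists>!c. c \<in> Q \<and> op c b = a) \<and>
     (\<forall>a\<in>Q. \<forall>b\<in>Q. \<forall>c\<in>Q. op (op a b) c = op (op a c) (op b c))"

definition Rmul :: "'a set \<Rightarrow> ('a \<Rightarrow> 'a \<Rightarrow> 'a) \<Rightarrow> 'a \<Rightarrow> ('a \<Rightarrow> 'a)" where
  "Rmul Q op a = (\<lambda>y\<in>Q. op y a)"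

text \<open>Elements are functions g with the action a g = g a.  (The group law of BijGroup
  is composition; the derived subgroup and centralizers do not depend on whether
  one composes on the left or on the right.)\<close>
definition Inn :: "'a set \<Rightarrow> ('a \<Rightarrow> 'a \<Rightarrow> 'a) \<Rightarrow> ('a \<Rightarrow> 'a) monoid" where
  "Inn Q op = (BijGroup Q)\<lparr>carrier := generate (BijGroup Q) (Rmul Q op ` Q)\<rparr>"

definition connected_quandle :: "'a set \<Rightarrow> ('a \<Rightarrow> 'a \<Rightarrow> 'a) \<Rightarrow> bool" where
  "connected_quandle Q op \<longleftrightarrow> quandle Q op \<and>
     (\<forall>a\<in>Q. \<forall>b\<in>Q. \<exists>g\<in>carrier (Inn Q op). g a = b)"

definition centralizer :: "('g, 'b) monoid_scheme \<Rightarrow> 'g \<Rightarrow> 'g set" where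
  "centralizer G x = {g \<in> carrier G. g \<otimes>\<^bsub>G\<^esub> x = x \<otimes>\<^bsub>G\<^esub> g}"

definition galex_op :: "('g, 'b) monoid_scheme \<Rightarrow> ('g \<Rightarrow> 'g) \<Rightarrow> 'g \<Rightarrow> 'g \<Rightarrow> 'g" where
  "galex_op H f a b = f (a \<otimes>\<^bsub>H\<^esub> inv\<^bsub>H\<^esub> b) \<otimes>\<^bsub>H\<^esub> b"

definition quandle_iso :: "'a set \<Rightarrow> ('a \<Rightarrow> 'a \<Rightarrow> 'a) \<Rightarrow> 'c set \<Rightarrow> ('c \<Rightarrow> 'c \<Rightarrow> 'c) \<Rightarrow> ('a \<Rightarrow> 'c) \<Rightarrow> bool" where
  "quandle_iso Q op P op' \<phi> \<longleftrightarrow> bij_betw \<phi> Q P \<and>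
     (\<forall>a\<in>Q. \<forall>b\<in>Q. \<phi> (op a b) = op' (\<phi> a) (\<phi> b))"

text \<open>The free Z-module Z[S]: finitely supported integer functions supported in S.\<close>
definition freeZ :: "'x set \<Rightarrow> ('x \<Rightarrow> int) set" where
  "freeZ S = {n. (\<forall>x. x \<notin> S \<longrightarrow> n x = 0) \<and> finite {x. n x \<noteq> 0}}"

text \<open>Linear extension of p: sum n_g g \<mapsto> sum n_g p(g).\<close>
definition pushZ :: "('x \<Rightarrow> 'y) \<Rightarrow> ('x \<Rightarrow> int) \<Rightarrow> ('y \<Rightarrow> int)" where
  "pushZ p n = (\<lambda>y. \<Sum>g\<in>{g. n g \<noteq> 0 \<and> p g = y}. n g)"

definition Zmod_iso :: "'x set \<Rightarrow> 'y set \<Rightarrow> (('x \<Rightarrow> int) \<Rightarrow> ('y \<Rightarrow> int)) \<Rightarrow> bool" where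
  "Zmod_iso A B F \<longleftrightarrow> bij_betw F (freeZ A) (freeZ B) \<and>
     (\<forall>m\<in>freeZ A. \<forall>n\<in>freeZ A. F (\<lambda>x. m x + n x) = (\<lambda>y. F m y + F n y)) \<and>
     (\<forall>k::int. \<forall>n\<in>freeZ A. F (\<lambda>x. k * n x) = (\<lambda>y. k * F n y))"

end

theory Submission
  imports Defs
begin

locale gs = group G0 for G0 :: "('g, 'b) monoid_scheme" (structure) +
  fixes Q :: "'a set" and op :: "'a \<Rightarrow> 'a \<Rightarrow> 'a" and f :: "'g \<Rightarrow> 'g" and \<phi> :: "'a \<Rightarrow> 'g"
  assumes finQ: "finite Q" and conn: "connected_quandle Q op"
    and fiso: "f \<in> iso G0 G0"
    and qiso: "quandle_iso Q op (carrier G0) (galex_op G0 f) \<phi>"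
begin

abbreviation "H \<equiv> carrier G0"
definition "\<psi> = inv_into Q \<phi>"
abbreviation "BG \<equiv> BijGroup Q"
definition "Rs = Rmul Q op ` Q"
definition "Gen = generate BG Rs"
definition "D = derived BG Gen"
definition "F n = f ^^ n"
definition "\<delta> A = inv (f A) \<otimes> A"
definition "aff n k g \<longleftrightarrow> (\<forall>y\<in>Q. \<phi> (g y) = F n (\<phi> y) \<otimes> k)"

lemma quandleQ: "quandle Q op" using conn by (simp add: connected_quandle_def)

lemma phi_bij: "bij_betw \<phi> Q H" using qiso by (simp add: quandle_iso_def)
lemma phi_in[simp]: "y \<in> Q \<Longrightarrow> \<phi> y \<in> H" using phi_bij bij_betwE by blast
lemma psi_in[simp]: "Y \<in> H \<Longrightarrow> \<psi> Y \<in> Q"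
  unfolding \<psi>_def using phi_bij by (metis bij_betw_def inv_into_into)
lemma phi_psi[simp]: "Y \<in> H \<Longrightarrow> \<phi> (\<psi> Y) = Y"
  unfolding \<psi>_def using phi_bij by (metis bij_betw_inv_into_right)
lemma phi_inj: "y \<in> Q \<Longrightarrow> z \<in> Q \<Longrightarrow> \<phi> y = \<phi> z \<Longrightarrow> y = z"
  using phi_bij by (metis bij_betw_def inj_onD)

lemma op_closed[simp]: "a \<in> Q \<Longrightarrow> b \<in> Q \<Longrightarrow> op a b \<in> Q"
  using quandleQ by (simp add: quandle_def)
lemma op_idem: "a \<in> Q \<Longrightarrow> op a a = a"
  using quandleQ by (simp add: quandle_def)

lemma f_hom: "f \<in> hom G0 G0" using fiso by (simp add: iso_def)
lemma f_bij: "bij_betw f H H" using fiso by (simp add: iso_def)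

lemma fgh: "group_hom G0 G0 f"
  by (simp add: group_hom.intro group_hom_axioms.intro f_hom is_group)

lemma f_in[simp]: "x \<in> H \<Longrightarrow> f x \<in> H" using f_hom by (simp add: hom_in_carrier)
lemma f_mult: "x \<in> H \<Longrightarrow> y \<in> H \<Longrightarrow> f (x \<otimes> y) = f x \<otimes> f y" using f_hom by (simp add: hom_mult)
lemma f_inv: "x \<in> H \<Longrightarrow> f (inv x) = inv (f x)" using group_hom.hom_inv[OF fgh] by simp

lemma f_one[simp]: "f \<one> = \<one>" using f_hom by (simp add: hom_one)
lemma Fin': "x \<in> H \<Longrightarrow> (f ^^ n) x \<in> H"
  by (induction n) auto
lemma F_in[simp]: "x \<in> H \<Longrightarrow> F n x \<in> H"
  unfolding F_def by (rule Fin')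
lemma F_mult: "x \<in> H \<Longrightarrow> y \<in> H \<Longrightarrow> F n (x \<otimes> y) = F n x \<otimes> F n y"
  unfolding F_def by (induction n) (auto simp: f_mult Fin')
lemma F_inv: "x \<in> H \<Longrightarrow> F n (inv x) = inv (F n x)"
  unfolding F_def by (induction n) (auto simp: f_inv Fin')
lemma F_one[simp]: "F n \<one> = \<one>"
  unfolding F_def by (induction n) auto
lemma F_0[simp]: "F 0 x = x" by (simp add: F_def)
lemma F_add: "F (n + m) x = F n (F m x)" by (simp add: F_def funpow_add)
lemma F_f: "F n (f x) = f (F n x)" by (simp add: F_def funpow_swap1)
lemma F_bij: "bij_betw (F n) H H"
  unfolding F_def by (rule bij_betw_funpow[OF f_bij])

lemma F_period: "\<exists>N>0. \<forall>y\<in>H. F N y = y"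
proof -
  let ?h = "\<lambda>n. restrict (F n) H"
  have finH: "finite H" using phi_bij finQ bij_betw_finite by blast
  have "range ?h \<subseteq> H \<rightarrow>\<^sub>E H" by auto
  moreover have "finite (H \<rightarrow>\<^sub>E H)" by (rule finite_PiE[OF finH]) (rule finH)
  ultimately have "finite (range ?h)" by (rule finite_subset)
  hence "\<not> inj ?h" using finite_imageD[of ?h UNIV] by auto
  then obtain a b where ab: "a \<noteq> b" "?h a = ?h b" unfolding inj_def by auto
  have key: "\<exists>N>0. \<forall>y\<in>H. F N y = y" if lt: "a < b" and eq: "?h a = ?h b" for a b
  proof (intro exI[of _ "b - a"] conjI ballI)
    fix y assume y: "y \<in> H"
    have "F a (F (b - a) y) = F b y" using lt F_add[of a "b-a" y] by simp
    also have "\<dots> = F a y" using fun_cong[OF eq, of y] y by simp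
    finally have "F a (F (b - a) y) = F a y" .
    moreover have "inj_on (F a) H" using F_bij[of a] by (simp add: bij_betw_def)
    ultimately show "F (b - a) y = y" using y by (meson F_in inj_onD)
  next
    show "0 < b - a" using lt by simp
  qed
  show ?thesis
  proof (cases "a < b")
    case True thus ?thesis using key ab by blast
  next
    case False hence "b < a" using ab(1) by simp
    thus ?thesis using key ab(2)[symmetric] by blast
  qed
qed

lemma delta_in[simp]: "A \<in> H \<Longrightarrow> \<delta> A \<in> H" by (simp add: \<delta>_def)

lemma galex: "a \<in> Q \<Longrightarrow> b \<in> Q \<Longrightarrow> \<phi> (op a b) = f (\<phi> a) \<otimes> \<delta> (\<phi> b)"
proof -
  assume a: "a \<in> Q" and b: "b \<in> Q"
  have "\<phi> (op a b) = galex_op G0 f (\<phi> a) (\<phi> b)" using qiso a b by (simp add: quandle_iso_def)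
  also have "\<dots> = f (\<phi> a) \<otimes> \<delta> (\<phi> b)"
    using a b by (simp add: galex_op_def \<delta>_def f_mult f_inv m_assoc)
  finally show ?thesis .
qed

lemma R_Bij: "a \<in> Q \<Longrightarrow> Rmul Q op a \<in> Bij Q"
proof -
  assume a: "a \<in> Q"
  have ex: "\<And>c. c \<in> Q \<Longrightarrow> \<exists>!x. x \<in> Q \<and> op x a = c"
  proof -
    fix c assume c: "c \<in> Q"
    from quandleQ have q3: "\<forall>a\<in>Q. \<forall>b\<in>Q. \<exists>!x. x \<in> Q \<and> op x b = a"
      unfolding quandle_def by (rule conjunct1[OF conjunct2[OF conjunct2]])
    show "\<exists>!x. x \<in> Q \<and> op x a = c" using q3 c a by simp
  qed
  have inj: "inj_on (\<lambda>y. op y a) Q"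
  proof (rule inj_onI)
    fix x y assume x: "x \<in> Q" and y: "y \<in> Q" and e: "op x a = op y a"
    have "op x a \<in> Q" using x a by simp
    hence u: "\<exists>!w. w \<in> Q \<and> op w a = op x a" by (rule ex)
    have "(THE w. w \<in> Q \<and> op w a = op x a) = x" by (rule the1_equality[OF u]) (simp add: x)
    moreover have "(THE w. w \<in> Q \<and> op w a = op x a) = y" by (rule the1_equality[OF u]) (simp add: y e)
    ultimately show "x = y" by simp
  qed
  have surj: "(\<lambda>y. op y a) ` Q = Q"
  proof
    show "(\<lambda>y. op y a) ` Q \<subseteq> Q" using a by auto
    show "Q \<subseteq> (\<lambda>y. op y a) ` Q"
    proof
      fix c assume "c \<in> Q"
      from ex[OF this] obtain x where "x \<in> Q" "op x a = c" by blast
      thus "c \<in> (\<lambda>y. op y a) ` Q" by force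
    qed
  qed
  have "bij_betw (\<lambda>y. op y a) Q Q" using inj surj by (simp add: bij_betw_def)
  moreover have "bij_betw (Rmul Q op a) Q Q = bij_betw (\<lambda>y. op y a) Q Q"
    by (rule bij_betw_cong) (simp add: Rmul_def)
  moreover have "Rmul Q op a \<in> extensional Q" by (simp add: Rmul_def)
  ultimately show ?thesis unfolding Bij_def by simp
qed

lemma BG_group: "group BG" by (rule group_BijGroup)
lemma BG_carrier[simp]: "carrier BG = Bij Q" by (simp add: BijGroup_def)
lemma BG_mult_apply: "g \<in> Bij Q \<Longrightarrow> h \<in> Bij Q \<Longrightarrow> y \<in> Q \<Longrightarrow> (g \<otimes>\<^bsub>BG\<^esub> h) y = g (h y)"
  by (simp add: BijGroup_def compose_def)
lemma BG_one_apply: "y \<in> Q \<Longrightarrow> \<one>\<^bsub>BG\<^esub> y = y"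
  by (simp add: BijGroup_def)
lemma BG_mult_Bij: "g \<in> Bij Q \<Longrightarrow> h \<in> Bij Q \<Longrightarrow> g \<otimes>\<^bsub>BG\<^esub> h \<in> Bij Q"
  by (simp add: BijGroup_def compose_Bij)
lemma Bij_in: "g \<in> Bij Q \<Longrightarrow> y \<in> Q \<Longrightarrow> g y \<in> Q"
  using Bij_imp_funcset by blast
lemma Bij_eqI: "g \<in> Bij Q \<Longrightarrow> h \<in> Bij Q \<Longrightarrow> (\<And>y. y \<in> Q \<Longrightarrow> g y = h y) \<Longrightarrow> g = h"
  using Bij_imp_extensional extensionalityI by metis
lemma BG_inv_Bij: "g \<in> Bij Q \<Longrightarrow> inv\<^bsub>BG\<^esub> g \<in> Bij Q"
  using group.inv_closed[OF BG_group] by simp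
lemma BG_inv_apply1: "g \<in> Bij Q \<Longrightarrow> y \<in> Q \<Longrightarrow> g ((inv\<^bsub>BG\<^esub> g) y) = y"
proof -
  assume g: "g \<in> Bij Q" and y: "y \<in> Q"
  have "g \<otimes>\<^bsub>BG\<^esub> inv\<^bsub>BG\<^esub> g = \<one>\<^bsub>BG\<^esub>" using group.r_inv[OF BG_group] g by simp
  from fun_cong[OF this, of y] show ?thesis using g y BG_inv_Bij BG_mult_apply BG_one_apply by metis
qed
lemma BG_inv_apply2: "g \<in> Bij Q \<Longrightarrow> y \<in> Q \<Longrightarrow> (inv\<^bsub>BG\<^esub> g) (g y) = y"
proof -
  assume g: "g \<in> Bij Q" and y: "y \<in> Q"
  have "inv\<^bsub>BG\<^esub> g \<otimes>\<^bsub>BG\<^esub> g = \<one>\<^bsub>BG\<^esub>" using group.l_inv[OF BG_group] g by simp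
  from fun_cong[OF this, of y] show ?thesis using g y BG_inv_Bij BG_mult_apply BG_one_apply by metis
qed

declare BG_inv_Bij[simp] BG_mult_Bij[simp]

lemma BG_cancel: "x \<in> Bij Q \<Longrightarrow> y \<in> Bij Q \<Longrightarrow> inv\<^bsub>BG\<^esub> x \<otimes>\<^bsub>BG\<^esub> (x \<otimes>\<^bsub>BG\<^esub> y) = y"
  using group.inv_solve_left'[OF BG_group, of y x "x \<otimes>\<^bsub>BG\<^esub> y"] by simp

lemma Rs_sub: "Rs \<subseteq> Bij Q" unfolding Rs_def using R_Bij by blast
lemma Gen_sub: "subgroup Gen BG"
  unfolding Gen_def using group.generate_is_subgroup[OF BG_group] Rs_sub by simp
lemma Gen_Bij: "g \<in> Gen \<Longrightarrow> g \<in> Bij Q"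
  using subgroup.mem_carrier[OF Gen_sub] by simp
lemma Inn_eq: "Inn Q op = BG\<lparr>carrier := Gen\<rparr>"
  by (simp add: Inn_def Gen_def Rs_def)
lemma D_eq: "derived (Inn Q op) (carrier (Inn Q op)) = D"
  unfolding Inn_eq D_def using group.derived_consistent[OF BG_group _ Gen_sub] by simp
lemma D_sub: "subgroup D BG"
  unfolding D_def using group.derived_is_subgroup[OF BG_group] subgroup.subset[OF Gen_sub] by simp
lemma D_Gen: "D \<subseteq> Gen"
  unfolding D_def using group.derived_incl[OF BG_group _ Gen_sub] by simp

lemma aff_comp:
  assumes g: "g \<in> Bij Q" and h: "h \<in> Bij Q" and ag: "aff n k g" and ah: "aff m l h"
    and k: "k \<in> H" and l: "l \<in> H"
  shows "aff (n + m) (F n l \<otimes> k) (g \<otimes>\<^bsub>BG\<^esub> h)"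
  unfolding aff_def
proof
  fix y assume y: "y \<in> Q"
  have "\<phi> ((g \<otimes>\<^bsub>BG\<^esub> h) y) = \<phi> (g (h y))" using g h y by (simp add: BG_mult_apply)
  also have "\<dots> = F n (\<phi> (h y)) \<otimes> k" using ag h y Bij_in unfolding aff_def by blast
  also have "\<dots> = F n (F m (\<phi> y) \<otimes> l) \<otimes> k" using ah y unfolding aff_def by simp
  also have "\<dots> = F (n + m) (\<phi> y) \<otimes> (F n l \<otimes> k)"
    using y k l by (simp add: F_mult F_add m_assoc)
  finally show "\<phi> ((g \<otimes>\<^bsub>BG\<^esub> h) y) = F (n + m) (\<phi> y) \<otimes> (F n l \<otimes> k)" .
qed

lemma aff_R: "b \<in> Q \<Longrightarrow> aff 1 (\<delta> (\<phi> b)) (Rmul Q op b)"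
  unfolding aff_def Rmul_def by (simp add: galex F_def)

lemma aff_Rinv:
  assumes b: "b \<in> Q" and N: "N > 0" "\<forall>y\<in>H. F N y = y"
  shows "aff (N - 1) (F (N - 1) (inv (\<delta> (\<phi> b)))) (inv\<^bsub>BG\<^esub> (Rmul Q op b))"
  unfolding aff_def
proof
  fix y assume y: "y \<in> Q"
  let ?R = "Rmul Q op b" and ?d = "\<delta> (\<phi> b)"
  have RB: "?R \<in> Bij Q" using R_Bij b by simp
  let ?z = "(inv\<^bsub>BG\<^esub> ?R) y"
  have z: "?z \<in> Q" using RB y BG_inv_Bij Bij_in by blast
  have "?R ?z = y" using BG_inv_apply1 RB y by blast
  hence "op ?z b = y" using z by (simp add: Rmul_def)
  hence "f (\<phi> ?z) \<otimes> ?d = \<phi> y" using galex z b by metis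
  hence e1: "f (\<phi> ?z) = \<phi> y \<otimes> inv ?d" using z b y by (metis delta_in f_in phi_in inv_solve_right)
  have Nsuc: "Suc (N - 1) = N" using N by simp
  have e2: "f (F (N - 1) w) = w" if "w \<in> H" for w
    using N(2) that Nsuc by (metis F_def comp_apply funpow.simps(2))
  have "f (\<phi> ?z) = f (F (N - 1) (\<phi> y \<otimes> inv ?d))" using e1 e2 y b by simp
  hence "\<phi> ?z = F (N - 1) (\<phi> y \<otimes> inv ?d)"
    using f_bij z y b by (meson F_in bij_betw_def delta_in inj_onD inv_closed m_closed phi_in)
  thus "\<phi> ?z = F (N - 1) (\<phi> y) \<otimes> F (N - 1) (inv ?d)" using y b by (simp add: F_mult)
qed

lemma Gen_aff: "g \<in> Gen \<Longrightarrow> \<exists>n. \<exists>k\<in>H. aff n k g"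
  unfolding Gen_def
proof (induction rule: generate.induct)
  case one
  have "aff 0 \<one> (\<one>\<^bsub>BG\<^esub>)" unfolding aff_def by (simp add: BG_one_apply)
  thus ?case by blast
next
  case (incl h)
  then obtain b where b: "b \<in> Q" "h = Rmul Q op b" unfolding Rs_def by blast
  have "aff 1 (\<delta> (\<phi> b)) h" using aff_R b by simp
  moreover have "\<delta> (\<phi> b) \<in> H" using b by simp
  ultimately show ?case by blast
next
  case (inv h)
  then obtain b where b: "b \<in> Q" "h = Rmul Q op b" unfolding Rs_def by blast
  obtain N where N: "N > 0" "\<forall>y\<in>H. F N y = y" using F_period by blast
  have "aff (N - 1) (F (N - 1) (inv (\<delta> (\<phi> b)))) (inv\<^bsub>BG\<^esub> h)" using aff_Rinv[OF b(1) N] b(2) by simp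
  moreover have "F (N - 1) (inv (\<delta> (\<phi> b))) \<in> H" using b by simp
  ultimately show ?case by blast
next
  case (eng h1 h2)
  then obtain n k m l where "k \<in> H" "l \<in> H" "aff n k h1" "aff m l h2" by blast
  moreover have "h1 \<in> Bij Q" "h2 \<in> Bij Q" using eng Gen_Bij unfolding Gen_def by auto
  ultimately have "aff (n + m) (F n l \<otimes> k) (h1 \<otimes>\<^bsub>BG\<^esub> h2)" "F n l \<otimes> k \<in> H"
    using aff_comp by auto
  thus ?case by blast
qed

lemma cancel1: "x \<in> H \<Longrightarrow> y \<in> H \<Longrightarrow> x \<otimes> (inv x \<otimes> y) = y"
  by (simp add: m_assoc[symmetric])

lemma delta_mult: "Z \<in> H \<Longrightarrow> k \<in> H \<Longrightarrow> \<delta> (Z \<otimes> k) = inv (f k) \<otimes> (\<delta> Z \<otimes> k)"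
  by (simp add: \<delta>_def f_mult inv_mult_group m_assoc)
lemma F_delta: "A \<in> H \<Longrightarrow> F n (\<delta> A) = \<delta> (F n A)"
  by (simp add: \<delta>_def F_mult F_inv F_f)

lemma aff_inv_id:
  assumes g: "g \<in> Bij Q" and g': "g' \<in> Bij Q" and a: "aff n k g" and a': "aff n' k' g'"
    and k: "k \<in> H" and k': "k' \<in> H" and one: "g \<otimes>\<^bsub>BG\<^esub> g' = \<one>\<^bsub>BG\<^esub>"
  shows "\<forall>Y\<in>H. F (n + n') Y = Y"
proof -
  let ?K = "F n k' \<otimes> k"
  have K: "?K \<in> H" using k k' by simp
  have c: "aff (n + n') ?K (\<one>\<^bsub>BG\<^esub>)" using aff_comp[OF g g' a a' k k'] one by simp
  have e: "\<phi> y = F (n + n') (\<phi> y) \<otimes> ?K" if "y \<in> Q" for y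
    using c that unfolding aff_def by (simp add: BG_one_apply)
  have "\<one> = F (n + n') \<one> \<otimes> ?K" using e[of "\<psi> \<one>"] by simp
  hence K1: "?K = \<one>" using K by simp
  show ?thesis
  proof
    fix Y assume Y: "Y \<in> H"
    show "F (n + n') Y = Y" using e[of "\<psi> Y"] Y K1 by simp
  qed
qed

lemma aff_0: "aff n k g \<Longrightarrow> \<forall>Y\<in>H. F n Y = Y \<Longrightarrow> aff 0 k g"
  unfolding aff_def by simp

lemma commutator_trans:
  assumes a: "a \<in> Gen" and b: "b \<in> Gen"
  shows "\<exists>k\<in>H. aff 0 k (a \<otimes>\<^bsub>BG\<^esub> b \<otimes>\<^bsub>BG\<^esub> inv\<^bsub>BG\<^esub> a \<otimes>\<^bsub>BG\<^esub> inv\<^bsub>BG\<^esub> b)"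
proof -
  have a': "inv\<^bsub>BG\<^esub> a \<in> Gen" and b': "inv\<^bsub>BG\<^esub> b \<in> Gen"
    using subgroup.m_inv_closed[OF Gen_sub] a b by auto
  obtain n k where k: "k \<in> H" and an: "aff n k a" using Gen_aff[OF a] by blast
  obtain m l where l: "l \<in> H" and bm: "aff m l b" using Gen_aff[OF b] by blast
  obtain n' k' where k': "k' \<in> H" and an': "aff n' k' (inv\<^bsub>BG\<^esub> a)" using Gen_aff[OF a'] by blast
  obtain m' l' where l': "l' \<in> H" and bm': "aff m' l' (inv\<^bsub>BG\<^esub> b)" using Gen_aff[OF b'] by blast
  have aB: "a \<in> Bij Q" and bB: "b \<in> Bij Q" and aB': "inv\<^bsub>BG\<^esub> a \<in> Bij Q" and bB': "inv\<^bsub>BG\<^esub> b \<in> Bij Q"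
    using a b a' b' Gen_Bij by auto
  have ia: "\<forall>Y\<in>H. F (n + n') Y = Y"
    by (rule aff_inv_id[OF aB aB' an an' k k']) (use group.r_inv[OF BG_group] aB in simp)
  have ib: "\<forall>Y\<in>H. F (m + m') Y = Y"
    by (rule aff_inv_id[OF bB bB' bm bm' l l']) (use group.r_inv[OF BG_group] bB in simp)
  have ab: "a \<otimes>\<^bsub>BG\<^esub> b \<in> Bij Q" using BG_mult_Bij aB bB by simp
  have aba: "a \<otimes>\<^bsub>BG\<^esub> b \<otimes>\<^bsub>BG\<^esub> inv\<^bsub>BG\<^esub> a \<in> Bij Q" using BG_mult_Bij ab aB' by simp
  have c1: "aff (n + m) (F n l \<otimes> k) (a \<otimes>\<^bsub>BG\<^esub> b)" by (rule aff_comp[OF aB bB an bm k l])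
  have c2: "aff (n + m + n') (F (n + m) k' \<otimes> (F n l \<otimes> k)) (a \<otimes>\<^bsub>BG\<^esub> b \<otimes>\<^bsub>BG\<^esub> inv\<^bsub>BG\<^esub> a)"
    by (rule aff_comp[OF ab aB' c1 an']) (use k l k' in simp_all)
  have c3: "aff (n + m + n' + m') (F (n + m + n') l' \<otimes> (F (n + m) k' \<otimes> (F n l \<otimes> k)))
     (a \<otimes>\<^bsub>BG\<^esub> b \<otimes>\<^bsub>BG\<^esub> inv\<^bsub>BG\<^esub> a \<otimes>\<^bsub>BG\<^esub> inv\<^bsub>BG\<^esub> b)"
    by (rule aff_comp[OF aba bB' c2 bm']) (use k l k' l' in simp_all)
  have "\<forall>Y\<in>H. F (n + m + n' + m') Y = Y"
  proof
    fix Y assume Y: "Y \<in> H"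
    have "n + m + n' + m' = (n + n') + (m + m')" by simp
    have "F (n + m + n' + m') Y = F (n + n') (F (m + m') Y)" unfolding \<open>n + m + n' + m' = (n + n') + (m + m')\<close> by (rule F_add)
    thus "F (n + m + n' + m') Y = Y" using ia ib Y by simp
  qed
  from aff_0[OF c3 this] show ?thesis using k l k' l' by (meson F_in m_closed)
qed

lemma trans_inv:
  assumes g: "g \<in> Bij Q" and a: "aff 0 k g" and k: "k \<in> H"
  shows "aff 0 (inv k) (inv\<^bsub>BG\<^esub> g)"
  unfolding aff_def
proof
  fix y assume y: "y \<in> Q"
  let ?z = "(inv\<^bsub>BG\<^esub> g) y"
  have z: "?z \<in> Q" using g y BG_inv_Bij Bij_in by blast
  have "g ?z = y" using BG_inv_apply1 g y by blast
  hence "\<phi> y = \<phi> ?z \<otimes> k" using a z unfolding aff_def by auto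
  thus "\<phi> ?z = F 0 (\<phi> y) \<otimes> inv k" using z y k by (simp add: m_assoc)
qed

lemma D_trans: "d \<in> D \<Longrightarrow> \<exists>k\<in>H. aff 0 k d"
  unfolding D_def derived_def
proof (induction rule: generate.induct)
  case one
  have "aff 0 \<one> (\<one>\<^bsub>BG\<^esub>)" unfolding aff_def by (simp add: BG_one_apply)
  thus ?case by blast
next
  case (incl h)
  thus ?case using commutator_trans by blast
next
  case (inv h)
  then obtain a b where "a \<in> Gen" "b \<in> Gen" and h: "h = a \<otimes>\<^bsub>BG\<^esub> b \<otimes>\<^bsub>BG\<^esub> inv\<^bsub>BG\<^esub> a \<otimes>\<^bsub>BG\<^esub> inv\<^bsub>BG\<^esub> b"
    by blast
  then obtain k where k: "k \<in> H" "aff 0 k h" using commutator_trans by blast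
  have "h \<in> Gen" using inv group.derived_set_incl[OF BG_group _ Gen_sub] by blast
  hence "h \<in> Bij Q" by (rule Gen_Bij)
  from trans_inv[OF this k(2) k(1)] k(1) show ?case by blast
next
  case (eng h1 h2)
  then obtain k l where "k \<in> H" "l \<in> H" "aff 0 k h1" "aff 0 l h2" by blast
  moreover have "h1 \<in> Bij Q" "h2 \<in> Bij Q" using eng D_Gen Gen_Bij unfolding D_def derived_def by auto
  ultimately have "aff (0 + 0) (F 0 l \<otimes> k) (h1 \<otimes>\<^bsub>BG\<^esub> h2)" "F 0 l \<otimes> k \<in> H"
    using aff_comp[of h1 h2 0 k 0 l] by auto
  thus ?case by auto
qed

lemma Dnormal: "x \<in> Gen \<Longrightarrow> h \<in> D \<Longrightarrow> x \<otimes>\<^bsub>BG\<^esub> h \<otimes>\<^bsub>BG\<^esub> inv\<^bsub>BG\<^esub> x \<in> D"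
proof -
  assume x: "x \<in> Gen" and h: "h \<in> D"
  have gI: "group (BG\<lparr>carrier := Gen\<rparr>)" using subgroup.subgroup_is_group[OF Gen_sub BG_group] .
  have "derived (BG\<lparr>carrier := Gen\<rparr>) (carrier (BG\<lparr>carrier := Gen\<rparr>)) \<lhd> BG\<lparr>carrier := Gen\<rparr>"
    by (rule group.derived_self_is_normal[OF gI])
  hence N: "D \<lhd> BG\<lparr>carrier := Gen\<rparr>" using D_eq unfolding Inn_eq by simp
  have "x \<otimes>\<^bsub>BG\<lparr>carrier := Gen\<rparr>\<^esub> h \<otimes>\<^bsub>BG\<lparr>carrier := Gen\<rparr>\<^esub> inv\<^bsub>BG\<lparr>carrier := Gen\<rparr>\<^esub> x \<in> D"
    using normal.inv_op_closed2[OF N, of x h] x h by simp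
  moreover have "inv\<^bsub>BG\<lparr>carrier := Gen\<rparr>\<^esub> x = inv\<^bsub>BG\<^esub> x"
    using group.m_inv_consistent[OF BG_group Gen_sub x] .
  ultimately show ?thesis by simp
qed

lemma R_conj:
  assumes g: "g \<in> Gen" and a: "a \<in> Q"
  shows "Rmul Q op (g a) \<otimes>\<^bsub>BG\<^esub> g = g \<otimes>\<^bsub>BG\<^esub> Rmul Q op a"
proof -
  have gB: "g \<in> Bij Q" using g Gen_Bij by blast
  obtain n k where k: "k \<in> H" and an: "aff n k g" using Gen_aff[OF g] by blast
  have ga: "g a \<in> Q" using gB a Bij_in by blast
  show ?thesis
  proof (rule Bij_eqI)
    show "Rmul Q op (g a) \<otimes>\<^bsub>BG\<^esub> g \<in> Bij Q" using BG_mult_Bij R_Bij ga gB by blast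
    show "g \<otimes>\<^bsub>BG\<^esub> Rmul Q op a \<in> Bij Q" using BG_mult_Bij R_Bij a gB by blast
  next
    fix y assume y: "y \<in> Q"
    have gy: "g y \<in> Q" using gB y Bij_in by blast
    have l: "(Rmul Q op (g a) \<otimes>\<^bsub>BG\<^esub> g) y = op (g y) (g a)"
      using BG_mult_Bij R_Bij ga gB y gy by (simp add: BG_mult_apply Rmul_def)
    have r: "(g \<otimes>\<^bsub>BG\<^esub> Rmul Q op a) y = g (op y a)"
      using R_Bij a gB y by (simp add: BG_mult_apply Rmul_def)
    let ?Y = "\<phi> y" and ?A = "\<phi> a"
    have Y: "?Y \<in> H" and A: "?A \<in> H" using y a by auto
    have "\<phi> (op (g y) (g a)) = f (\<phi> (g y)) \<otimes> \<delta> (\<phi> (g a))" using galex gy ga by blast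
    also have "\<dots> = f (F n ?Y \<otimes> k) \<otimes> \<delta> (F n ?A \<otimes> k)" using an y a unfolding aff_def by simp
    also have "\<dots> = f (F n ?Y) \<otimes> (\<delta> (F n ?A) \<otimes> k)"
      using Y A k by (simp add: delta_mult f_mult m_assoc cancel1)
    also have "\<dots> = F n (f ?Y \<otimes> \<delta> ?A) \<otimes> k" using Y A k by (simp add: F_mult F_f F_delta m_assoc)
    also have "\<dots> = \<phi> (g (op y a))" using an y a galex unfolding aff_def by simp
    finally have "\<phi> (op (g y) (g a)) = \<phi> (g (op y a))" .
    hence "op (g y) (g a) = g (op y a)" using phi_inj gy ga y a gB Bij_in op_closed by metis
    thus "(Rmul Q op (g a) \<otimes>\<^bsub>BG\<^esub> g) y = (g \<otimes>\<^bsub>BG\<^esub> Rmul Q op a) y" using l r by simp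
  qed
qed

abbreviation "e0 \<equiv> \<psi> \<one>"
lemma e0_in: "e0 \<in> Q" by simp

lemma R_Gen: "a \<in> Q \<Longrightarrow> Rmul Q op a \<in> Gen"
  unfolding Gen_def Rs_def by (rule generate.incl) blast

lemma Rdiff: "b \<in> Q \<Longrightarrow> Rmul Q op b \<otimes>\<^bsub>BG\<^esub> inv\<^bsub>BG\<^esub> Rmul Q op e0 \<in> D"
proof -
  assume b: "b \<in> Q"
  interpret B: group BG by (rule BG_group)
  have "\<exists>g\<in>Gen. g e0 = b" using conn e0_in b unfolding connected_quandle_def Inn_eq by simp
  then obtain g where g: "g \<in> Gen" "g e0 = b" by blast
  let ?R = "Rmul Q op e0" and ?Rb = "Rmul Q op b"
  have gB: "g \<in> carrier BG" using g Gen_Bij by simp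
  have RB: "?R \<in> carrier BG" "?Rb \<in> carrier BG" using R_Bij b by auto
  have "?Rb \<otimes>\<^bsub>BG\<^esub> g = g \<otimes>\<^bsub>BG\<^esub> ?R" using R_conj[OF g(1) e0_in] g(2) by simp
  hence "?Rb = g \<otimes>\<^bsub>BG\<^esub> ?R \<otimes>\<^bsub>BG\<^esub> inv\<^bsub>BG\<^esub> g"
    using gB RB by (metis B.inv_solve_right B.m_closed)
  hence "?Rb \<otimes>\<^bsub>BG\<^esub> inv\<^bsub>BG\<^esub> ?R = g \<otimes>\<^bsub>BG\<^esub> ?R \<otimes>\<^bsub>BG\<^esub> inv\<^bsub>BG\<^esub> g \<otimes>\<^bsub>BG\<^esub> inv\<^bsub>BG\<^esub> ?R"
    by simp
  moreover have "g \<otimes>\<^bsub>BG\<^esub> ?R \<otimes>\<^bsub>BG\<^esub> inv\<^bsub>BG\<^esub> g \<otimes>\<^bsub>BG\<^esub> inv\<^bsub>BG\<^esub> ?R \<in> derived_set BG Gen"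
    using g(1) R_Gen[OF e0_in] by blast
  ultimately show ?thesis unfolding D_def derived_def by (simp add: generate.incl)
qed

lemma R_e0_fix: "Rmul Q op e0 e0 = e0" by (simp add: Rmul_def op_idem)

lemma decomp: "g \<in> Gen \<Longrightarrow> \<exists>d\<in>D. \<exists>p\<in>Gen. p e0 = e0 \<and> g = d \<otimes>\<^bsub>BG\<^esub> p"
proof -
  interpret B: group BG by (rule BG_group)
  have DG: "\<And>x. x \<in> D \<Longrightarrow> x \<in> carrier BG" using D_Gen Gen_Bij by auto
  have GG: "\<And>x. x \<in> Gen \<Longrightarrow> x \<in> carrier BG" using Gen_Bij by auto
  let ?R = "Rmul Q op e0"
  have RG: "?R \<in> Gen" by (rule R_Gen[OF e0_in])
  have RC: "?R \<in> carrier BG" using GG[OF RG] .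
  show "g \<in> Gen \<Longrightarrow> ?thesis"
    unfolding Gen_def
  proof (induction rule: generate.induct)
    case one
    have "\<one>\<^bsub>BG\<^esub> \<in> D" "\<one>\<^bsub>BG\<^esub> \<in> Gen" using subgroup.one_closed[OF D_sub] subgroup.one_closed[OF Gen_sub] by auto
    moreover have "\<one>\<^bsub>BG\<^esub> e0 = e0" by (simp add: BG_one_apply)
    moreover have "\<one>\<^bsub>BG\<^esub> = \<one>\<^bsub>BG\<^esub> \<otimes>\<^bsub>BG\<^esub> \<one>\<^bsub>BG\<^esub>" using B.l_one[OF B.one_closed] by simp
    ultimately show ?case unfolding Gen_def[symmetric] by blast
  next
    case (incl h)
    then obtain b where b: "b \<in> Q" "h = Rmul Q op b" unfolding Rs_def by blast
    let ?d = "h \<otimes>\<^bsub>BG\<^esub> inv\<^bsub>BG\<^esub> ?R"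
    have d: "?d \<in> D" using Rdiff b by simp
    have hC: "h \<in> carrier BG" using b R_Bij by simp
    have "?d \<otimes>\<^bsub>BG\<^esub> ?R = h \<otimes>\<^bsub>BG\<^esub> (inv\<^bsub>BG\<^esub> ?R \<otimes>\<^bsub>BG\<^esub> ?R)"
      by (rule B.m_assoc) (use hC RC in simp_all)
    also have "\<dots> = h" using hC RC B.l_inv B.r_one by simp
    finally have "h = ?d \<otimes>\<^bsub>BG\<^esub> ?R" by simp
    thus ?case unfolding Gen_def[symmetric] using d RG R_e0_fix by blast
  next
    case (inv h)
    then obtain b where b: "b \<in> Q" "h = Rmul Q op b" unfolding Rs_def by blast
    let ?d0 = "h \<otimes>\<^bsub>BG\<^esub> inv\<^bsub>BG\<^esub> ?R"
    have d0: "?d0 \<in> D" using Rdiff b by simp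
    have hC: "h \<in> carrier BG" using b R_Bij by simp
    let ?p = "inv\<^bsub>BG\<^esub> ?R"
    let ?d = "?p \<otimes>\<^bsub>BG\<^esub> inv\<^bsub>BG\<^esub> ?d0 \<otimes>\<^bsub>BG\<^esub> inv\<^bsub>BG\<^esub> ?p"
    have pG: "?p \<in> Gen" using subgroup.m_inv_closed[OF Gen_sub RG] .
    have d: "?d \<in> D" by (rule Dnormal[OF pG]) (rule subgroup.m_inv_closed[OF D_sub d0])
    have eq: "inv\<^bsub>BG\<^esub> h = ?d \<otimes>\<^bsub>BG\<^esub> ?p"
      using hC RC by (simp add: B.m_assoc B.inv_mult_group BG_cancel)
    have "?p e0 = e0"
      using BG_inv_apply2[of ?R e0] RC R_e0_fix by simp
    thus ?case unfolding Gen_def[symmetric] using d pG eq by blast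
  next
    case (eng h1 h2)
    then obtain d1 p1 d2 p2 where a: "d1 \<in> D" "p1 \<in> Gen" "p1 e0 = e0" "h1 = d1 \<otimes>\<^bsub>BG\<^esub> p1"
      and c: "d2 \<in> D" "p2 \<in> Gen" "p2 e0 = e0" "h2 = d2 \<otimes>\<^bsub>BG\<^esub> p2" unfolding Gen_def by blast
    let ?d = "d1 \<otimes>\<^bsub>BG\<^esub> (p1 \<otimes>\<^bsub>BG\<^esub> d2 \<otimes>\<^bsub>BG\<^esub> inv\<^bsub>BG\<^esub> p1)"
    let ?p = "p1 \<otimes>\<^bsub>BG\<^esub> p2"
    have d: "?d \<in> D" using subgroup.m_closed[OF D_sub a(1) Dnormal[OF a(2) c(1)]] .
    have p: "?p \<in> Gen" using subgroup.m_closed[OF Gen_sub a(2) c(2)] .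
    have pe: "?p e0 = e0" using a(2,3) c(2,3) Gen_Bij BG_mult_apply e0_in by metis
    have "h1 \<otimes>\<^bsub>BG\<^esub> h2 = ?d \<otimes>\<^bsub>BG\<^esub> ?p"
      using DG[OF a(1)] DG[OF c(1)] GG[OF a(2)] GG[OF c(2)] a(4) c(4) by (simp add: B.m_assoc BG_cancel)
    thus ?case unfolding Gen_def[symmetric] using d p pe by blast
  qed
qed

lemma trans_exists: "k \<in> H \<Longrightarrow> \<exists>d\<in>D. aff 0 k d"
proof -
  assume k: "k \<in> H"
  have "\<exists>g\<in>Gen. g e0 = \<psi> k" using conn e0_in k unfolding connected_quandle_def Inn_eq by simp
  then obtain g where g: "g \<in> Gen" "g e0 = \<psi> k" by blast
  obtain d p where dp: "d \<in> D" "p \<in> Gen" "p e0 = e0" "g = d \<otimes>\<^bsub>BG\<^esub> p" using decomp[OF g(1)] by blast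
  have "d e0 = \<psi> k" using g dp Gen_Bij D_Gen BG_mult_apply e0_in by (metis subsetD)
  moreover obtain l where l: "l \<in> H" "aff 0 l d" using D_trans[OF dp(1)] by blast
  ultimately have "k = l" using l k e0_in unfolding aff_def by (metis F_0 l_one one_closed phi_psi)
  thus ?thesis using l dp by blast
qed

lemma delta_comm: "u \<in> H \<Longrightarrow> k \<in> H \<Longrightarrow> (\<delta> (u \<otimes> k) = \<delta> u) \<longleftrightarrow> (\<delta> u \<otimes> k = f k \<otimes> \<delta> u)"
  using inv_solve_left'[of "\<delta> u" "f k" "\<delta> u \<otimes> k"] by (simp add: delta_mult)

lemma Rmul_eq: "a \<in> Q \<Longrightarrow> e \<in> Q \<Longrightarrow> (Rmul Q op a = Rmul Q op e) \<longleftrightarrow> (\<delta> (\<phi> a) = \<delta> (\<phi> e))"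
proof
  assume a: "a \<in> Q" and e: "e \<in> Q" and eq: "Rmul Q op a = Rmul Q op e"
  have "op e a = op e e" using fun_cong[OF eq, of e] e by (simp add: Rmul_def)
  hence "f (\<phi> e) \<otimes> \<delta> (\<phi> a) = f (\<phi> e) \<otimes> \<delta> (\<phi> e)" using galex a e by metis
  thus "\<delta> (\<phi> a) = \<delta> (\<phi> e)" using a e by (meson delta_in f_in l_cancel phi_in)
next
  assume a: "a \<in> Q" and e: "e \<in> Q" and eq: "\<delta> (\<phi> a) = \<delta> (\<phi> e)"
  show "Rmul Q op a = Rmul Q op e"
  proof (rule Bij_eqI[OF R_Bij[OF a] R_Bij[OF e]])
    fix y assume y: "y \<in> Q"
    have "\<phi> (op y a) = \<phi> (op y e)" using galex a e y eq by simp
    hence "op y a = op y e" using phi_inj y a e by simp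
    thus "Rmul Q op a y = Rmul Q op e y" using y by (simp add: Rmul_def)
  qed
qed

lemma trans_comm:
  assumes d: "d \<in> Bij Q" and ad: "aff 0 l d" and l: "l \<in> H" and e: "e \<in> Q"
  shows "(d \<otimes>\<^bsub>BG\<^esub> Rmul Q op e = Rmul Q op e \<otimes>\<^bsub>BG\<^esub> d) \<longleftrightarrow> (\<delta> (\<phi> e) \<otimes> l = f l \<otimes> \<delta> (\<phi> e))"
proof -
  have RB: "Rmul Q op e \<in> Bij Q" using R_Bij e by simp
  have pt: "\<phi> ((d \<otimes>\<^bsub>BG\<^esub> Rmul Q op e) y) = f (\<phi> y) \<otimes> (\<delta> (\<phi> e) \<otimes> l)"
    and pt2: "\<phi> ((Rmul Q op e \<otimes>\<^bsub>BG\<^esub> d) y) = f (\<phi> y) \<otimes> (f l \<otimes> \<delta> (\<phi> e))" if y: "y \<in> Q" for y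
  proof -
    have dy: "d y \<in> Q" using d y Bij_in by blast
    have "(d \<otimes>\<^bsub>BG\<^esub> Rmul Q op e) y = d (op y e)" using d RB y by (simp add: BG_mult_apply Rmul_def)
    moreover have "\<phi> (d (op y e)) = \<phi> (op y e) \<otimes> l" using ad y e unfolding aff_def by simp
    ultimately show "\<phi> ((d \<otimes>\<^bsub>BG\<^esub> Rmul Q op e) y) = f (\<phi> y) \<otimes> (\<delta> (\<phi> e) \<otimes> l)"
      using galex y e l by (simp add: m_assoc)
    have "(Rmul Q op e \<otimes>\<^bsub>BG\<^esub> d) y = op (d y) e" using d RB y dy by (simp add: BG_mult_apply Rmul_def)
    moreover have "\<phi> (d y) = \<phi> y \<otimes> l" using ad y unfolding aff_def by simp
    ultimately show "\<phi> ((Rmul Q op e \<otimes>\<^bsub>BG\<^esub> d) y) = f (\<phi> y) \<otimes> (f l \<otimes> \<delta> (\<phi> e))"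
      using galex dy e l y by (simp add: m_assoc f_mult)
  qed
  show ?thesis
  proof
    assume c: "d \<otimes>\<^bsub>BG\<^esub> Rmul Q op e = Rmul Q op e \<otimes>\<^bsub>BG\<^esub> d"
    have "f (\<phi> e0) \<otimes> (\<delta> (\<phi> e) \<otimes> l) = f (\<phi> e0) \<otimes> (f l \<otimes> \<delta> (\<phi> e))"
      using pt[OF e0_in] pt2[OF e0_in] c by simp
    thus "\<delta> (\<phi> e) \<otimes> l = f l \<otimes> \<delta> (\<phi> e)" using e l by simp
  next
    assume c: "\<delta> (\<phi> e) \<otimes> l = f l \<otimes> \<delta> (\<phi> e)"
    show "d \<otimes>\<^bsub>BG\<^esub> Rmul Q op e = Rmul Q op e \<otimes>\<^bsub>BG\<^esub> d"
    proof (rule Bij_eqI)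
      show "d \<otimes>\<^bsub>BG\<^esub> Rmul Q op e \<in> Bij Q" "Rmul Q op e \<otimes>\<^bsub>BG\<^esub> d \<in> Bij Q" using d RB by auto
    next
      fix y assume y: "y \<in> Q"
      have "\<phi> ((d \<otimes>\<^bsub>BG\<^esub> Rmul Q op e) y) = \<phi> ((Rmul Q op e \<otimes>\<^bsub>BG\<^esub> d) y)"
        using pt[OF y] pt2[OF y] c by simp
      thus "(d \<otimes>\<^bsub>BG\<^esub> Rmul Q op e) y = (Rmul Q op e \<otimes>\<^bsub>BG\<^esub> d) y"
        using phi_inj y d RB Bij_in BG_mult_Bij by metis
    qed
  qed
qed

lemma centr_eq: "centralizer (Inn Q op) x = {g \<in> Gen. g \<otimes>\<^bsub>BG\<^esub> x = x \<otimes>\<^bsub>BG\<^esub> g}"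
  by (simp add: centralizer_def Inn_eq)

lemma main_bij:
  assumes e: "e \<in> Q"
  shows "bij_betw (\<lambda>g. g e) (centralizer (Inn Q op) (Rmul Q op e) \<inter> D) {a \<in> Q. Rmul Q op a = Rmul Q op e}"
  unfolding bij_betw_def
proof (intro conjI)
  let ?C = "centralizer (Inn Q op) (Rmul Q op e) \<inter> D"
  let ?u = "\<phi> e"
  have u: "?u \<in> H" using e by simp
  show "inj_on (\<lambda>g. g e) ?C"
  proof (rule inj_onI)
    fix g h assume g: "g \<in> ?C" and h: "h \<in> ?C" and eq: "g e = h e"
    have gD: "g \<in> D" and hD: "h \<in> D" using g h by auto
    have gB: "g \<in> Bij Q" and hB: "h \<in> Bij Q" using gD hD D_Gen Gen_Bij by auto
    obtain l where l: "l \<in> H" "aff 0 l g" using D_trans[OF gD] by blast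
    obtain l' where l': "l' \<in> H" "aff 0 l' h" using D_trans[OF hD] by blast
    have "?u \<otimes> l = ?u \<otimes> l'" using l l' e eq unfolding aff_def by (metis F_0)
    hence ll: "l = l'" using u l l' by (meson l_cancel)
    show "g = h"
    proof (rule Bij_eqI[OF gB hB])
      fix y assume y: "y \<in> Q"
      have "\<phi> (g y) = \<phi> (h y)" using l l' ll y unfolding aff_def by simp
      thus "g y = h y" using phi_inj y gB hB Bij_in by metis
    qed
  qed
  show "(\<lambda>g. g e) ` ?C = {a \<in> Q. Rmul Q op a = Rmul Q op e}"
  proof
    show "(\<lambda>g. g e) ` ?C \<subseteq> {a \<in> Q. Rmul Q op a = Rmul Q op e}"
    proof
      fix a assume "a \<in> (\<lambda>g. g e) ` ?C"
      then obtain g where g: "g \<in> ?C" and a: "a = g e" by blast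
      have gD: "g \<in> D" using g by auto
      have gB: "g \<in> Bij Q" using gD D_Gen Gen_Bij by auto
      have comm: "g \<otimes>\<^bsub>BG\<^esub> Rmul Q op e = Rmul Q op e \<otimes>\<^bsub>BG\<^esub> g" using g centr_eq by auto
      obtain l where l: "l \<in> H" "aff 0 l g" using D_trans[OF gD] by blast
      have c: "\<delta> ?u \<otimes> l = f l \<otimes> \<delta> ?u" using trans_comm[OF gB l(2) l(1) e] comm by simp
      have ge: "g e \<in> Q" using gB e Bij_in by blast
      have "\<phi> (g e) = ?u \<otimes> l" using l e unfolding aff_def by simp
      hence "\<delta> (\<phi> (g e)) = \<delta> ?u" using delta_comm[OF u l(1)] c by simp
      hence "Rmul Q op (g e) = Rmul Q op e" using Rmul_eq ge e by blast
      thus "a \<in> {a \<in> Q. Rmul Q op a = Rmul Q op e}" using a ge by simp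
    qed
    show "{a \<in> Q. Rmul Q op a = Rmul Q op e} \<subseteq> (\<lambda>g. g e) ` ?C"
    proof
      fix a assume "a \<in> {a \<in> Q. Rmul Q op a = Rmul Q op e}"
      hence a: "a \<in> Q" and ra: "Rmul Q op a = Rmul Q op e" by auto
      let ?v = "\<phi> a"
      have v: "?v \<in> H" using a by simp
      let ?k = "inv ?u \<otimes> ?v"
      have k: "?k \<in> H" using u v by simp
      obtain d where d: "d \<in> D" "aff 0 ?k d" using trans_exists[OF k] by blast
      have dB: "d \<in> Bij Q" and dG: "d \<in> Gen" using d D_Gen Gen_Bij by auto
      have uk: "?u \<otimes> ?k = ?v" using u v by (simp add: m_assoc[symmetric])
      have "\<phi> (d e) = ?v" using d e uk unfolding aff_def by simp
      hence de: "d e = a" using phi_inj dB e a Bij_in by metis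
      have "\<delta> ?v = \<delta> ?u" using Rmul_eq a e ra by blast
      hence "\<delta> (?u \<otimes> ?k) = \<delta> ?u" using uk by simp
      hence "\<delta> ?u \<otimes> ?k = f ?k \<otimes> \<delta> ?u" using delta_comm[OF u k] by simp
      hence "d \<otimes>\<^bsub>BG\<^esub> Rmul Q op e = Rmul Q op e \<otimes>\<^bsub>BG\<^esub> d" using trans_comm[OF dB d(2) k e] by simp
      hence "d \<in> ?C" using dG d(1) centr_eq by auto
      thus "a \<in> (\<lambda>g. g e) ` ?C" using de by force
    qed
  qed
qed

end

lemma pushZ_formula:
  assumes p: "bij_betw p A B" and n: "n \<in> freeZ A"
  shows "pushZ p n y = (if y \<in> B then n (inv_into A p y) else 0)"
proof (cases "y \<in> B")
  case True
  let ?x = "inv_into A p y"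
  have x: "?x \<in> A" "p ?x = y" using p True by (auto simp: bij_betw_def inv_into_into f_inv_into_f)
  have sub: "{g. n g \<noteq> 0 \<and> p g = y} \<subseteq> {?x}"
  proof
    fix g assume g: "g \<in> {g. n g \<noteq> 0 \<and> p g = y}"
    hence "g \<in> A" using n unfolding freeZ_def by auto
    thus "g \<in> {?x}" using g x p unfolding bij_betw_def by (auto dest: inj_onD)
  qed
  show ?thesis
  proof (cases "n ?x = 0")
    case True
    hence e: "{g. n g \<noteq> 0 \<and> p g = y} = {}" using sub by auto
    have "pushZ p n y = sum n {}" by (simp only: pushZ_def e)
    thus ?thesis using True \<open>y \<in> B\<close> by simp
  next
    case False
    hence e: "{g. n g \<noteq> 0 \<and> p g = y} = {?x}" using sub x by auto
    have "pushZ p n y = sum n {?x}" by (simp only: pushZ_def e)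
    thus ?thesis using \<open>y \<in> B\<close> by simp
  qed
next
  case False
  have "{g. n g \<noteq> 0 \<and> p g = y} = {}"
  proof -
    { fix g assume "n g \<noteq> 0" "p g = y"
      hence "g \<in> A" using n unfolding freeZ_def by auto
      hence "p g \<in> B" using p bij_betwE by blast
      hence False using \<open>p g = y\<close> False by simp }
    thus ?thesis by auto
  qed
  hence "pushZ p n y = sum n {}" by (simp only: pushZ_def)
  thus ?thesis using False by simp
qed

lemma pushZ_iso:
  assumes p: "bij_betw p A B"
  shows "Zmod_iso A B (pushZ p)"
proof -
  let ?q = "inv_into A p"
  have q: "bij_betw ?q B A" using p by (rule bij_betw_inv_into)
  have pf: "\<And>n y. n \<in> freeZ A \<Longrightarrow> pushZ p n y = (if y \<in> B then n (?q y) else 0)"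
    using pushZ_formula[OF p] by blast
  have addA: "(\<lambda>x. m x + n x) \<in> freeZ A" if "m \<in> freeZ A" "n \<in> freeZ A" for m n
  proof -
    have "{x. m x + n x \<noteq> 0} \<subseteq> {x. m x \<noteq> 0} \<union> {x. n x \<noteq> 0}" by auto
    thus ?thesis using that unfolding freeZ_def by (auto intro: finite_subset)
  qed
  have smulA: "(\<lambda>x. k * n x) \<in> freeZ A" if "n \<in> freeZ A" for n and k :: int
  proof -
    have "{x. k * n x \<noteq> 0} \<subseteq> {x. n x \<noteq> 0}" by auto
    thus ?thesis using that unfolding freeZ_def by (auto intro: finite_subset)
  qed
  have qp: "\<And>x. x \<in> A \<Longrightarrow> ?q (p x) = x" using p by (simp add: bij_betw_def)
  have pq: "\<And>y. y \<in> B \<Longrightarrow> p (?q y) = y" using p by (simp add: bij_betw_def f_inv_into_f)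
  have pA: "\<And>x. x \<in> A \<Longrightarrow> p x \<in> B" using p bij_betwE by blast
  have qB: "\<And>y. y \<in> B \<Longrightarrow> ?q y \<in> A" using q bij_betwE by blast
  have img: "pushZ p n \<in> freeZ B" if n: "n \<in> freeZ A" for n
  proof -
    have "{y. pushZ p n y \<noteq> 0} \<subseteq> p ` {x. n x \<noteq> 0}"
    proof
      fix y assume "y \<in> {y. pushZ p n y \<noteq> 0}"
      hence y: "y \<in> B" "n (?q y) \<noteq> 0" using pf[OF n, of y] by (auto split: if_splits)
      have "y = p (?q y)" using pq[OF y(1)] by simp
      moreover have "?q y \<in> {x. n x \<noteq> 0}" using y(2) by simp
      ultimately show "y \<in> p ` {x. n x \<noteq> 0}" by (rule image_eqI)
    qed
    moreover have "finite {x. n x \<noteq> 0}" using n unfolding freeZ_def by auto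
    ultimately have "finite {y. pushZ p n y \<noteq> 0}" by (meson finite_imageI finite_subset)
    thus ?thesis using pf[OF n] unfolding freeZ_def by auto
  qed
  have bij: "bij_betw (pushZ p) (freeZ A) (freeZ B)"
    unfolding bij_betw_def
  proof (intro conjI)
    show "inj_on (pushZ p) (freeZ A)"
    proof (rule inj_onI)
      fix m n assume m: "m \<in> freeZ A" and n: "n \<in> freeZ A" and eq: "pushZ p m = pushZ p n"
      show "m = n"
      proof
        fix x show "m x = n x"
        proof (cases "x \<in> A")
          case True
          have "pushZ p m (p x) = pushZ p n (p x)" using eq by simp
          thus ?thesis using pf[OF m, of "p x"] pf[OF n, of "p x"] True pA qp by simp
        next
          case False thus ?thesis using m n unfolding freeZ_def by auto
        qed
      qed
    qed
    show "pushZ p ` freeZ A = freeZ B"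
    proof
      show "pushZ p ` freeZ A \<subseteq> freeZ B" using img by blast
      show "freeZ B \<subseteq> pushZ p ` freeZ A"
      proof
        fix n' assume n': "n' \<in> freeZ B"
        let ?m = "\<lambda>x. if x \<in> A then n' (p x) else 0"
        have "{x. ?m x \<noteq> 0} \<subseteq> p -` {y. n' y \<noteq> 0} \<inter> A" by auto
        moreover have "finite (p -` {y. n' y \<noteq> 0} \<inter> A)"
          by (intro finite_vimage_IntI) (use n' p in \<open>simp_all add: freeZ_def bij_betw_def\<close>)
        ultimately have "finite {x. ?m x \<noteq> 0}" by (rule finite_subset)
        hence m: "?m \<in> freeZ A" unfolding freeZ_def by simp
        have "pushZ p ?m = n'"
        proof
          fix y show "pushZ p ?m y = n' y"
          proof (cases "y \<in> B")
            case True thus ?thesis using pf[OF m, of y] qB[OF True] pq[OF True] by simp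
          next
            case False thus ?thesis using pf[OF m, of y] n' unfolding freeZ_def by simp
          qed
        qed
        thus "n' \<in> pushZ p ` freeZ A" using m by (metis image_eqI)
      qed
    qed
  qed
  show ?thesis
    unfolding Zmod_iso_def
  proof (intro conjI ballI allI)
    show "bij_betw (pushZ p) (freeZ A) (freeZ B)" by (rule bij)
  next
    fix m n assume m: "m \<in> freeZ A" and n: "n \<in> freeZ A"
    show "pushZ p (\<lambda>x. m x + n x) = (\<lambda>y. pushZ p m y + pushZ p n y)"
      using pf[OF addA[OF m n]] pf[OF m] pf[OF n] by auto
  next
    fix k :: int and n assume n: "n \<in> freeZ A"
    show "pushZ p (\<lambda>x. k * n x) = (\<lambda>y. k * pushZ p n y)"
      using pf[OF smulA[OF n]] pf[OF n] by auto
  qed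
qed

theorem mainTheorem7:
  fixes Q :: "'a set" and op :: "'a \<Rightarrow> 'a \<Rightarrow> 'a"
    and G0 :: "('g, 'b) monoid_scheme" and f :: "'g \<Rightarrow> 'g" and \<phi> :: "'a \<Rightarrow> 'g"
    and e :: 'a
  assumes "finite Q" and "connected_quandle Q op"
    and "group G0" and "finite (carrier G0)" and "f \<in> iso G0 G0"
    and "quandle_iso Q op (carrier G0) (galex_op G0 f) \<phi>"
    and "e \<in> Q"
  shows "bij_betw (\<lambda>g. g e)
           (centralizer (Inn Q op) (Rmul Q op e) \<inter> derived (Inn Q op) (carrier (Inn Q op)))
           {a \<in> Q. Rmul Q op a = Rmul Q op e}
       \<and> Zmod_iso
           (centralizer (Inn Q op) (Rmul Q op e) \<inter> derived (Inn Q op) (carrier (Inn Q op)))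
           {a \<in> Q. Rmul Q op a = Rmul Q op e}
           (pushZ (\<lambda>g. g e))"
proof -
  interpret gs G0 Q op f \<phi>
    using assms by (simp add: gs_def gs_axioms_def)
  have b: "bij_betw (\<lambda>g. g e)
           (centralizer (Inn Q op) (Rmul Q op e) \<inter> derived (Inn Q op) (carrier (Inn Q op)))
           {a \<in> Q. Rmul Q op a = Rmul Q op e}"
    using main_bij[OF assms(7)] D_eq by simp
  thus ?thesis using pushZ_iso[OF b] by simp
qed

end
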